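(* Let $M$ be a Mealy machine and let $A$ be an NFA over $I_M$. Let $s,t\in S_M$ and $a,b\in S_A$, and suppose that $\mathcal{L}_A(b)\subseteq \mathcal{L}_A(a)$ and that $(s,a)\nsim (t,b)$. Then there exists a word $\alpha\in \mathcal{L}_A(b)$ such that $\alpha$ witnesses $(s,a)\nsim(t,b)$ (i.e. $\alpha\in\mathcal{L}_A(a)\cap\mathcal{L}_A(b)$ and $\lambda_M(s,\alpha)\neq\lambda_M(t,\alpha)$) and $|\alpha|\leq |S_M|\,|S_A|$.
   Context: A Mealy machine is $M=(I_M,O_M,S_M,\delta_M,\lambda_M,r_M)$ with finite input/output alphabets $I_M,O_M$, finite state set $S_M$, next-state function $\delta_M:S_M\times I_M\to S_M$, output function $\lambda_M:S_M\times I_M\to O_M$, initial state $r_M$; $\delta_M,\lambda_M$ are extended to words in the usual way ($\delta_M(s,\epsilon)=s$, $\lambda_M(s,\epsilon)=\epsilon$, $\delta_M(s,\alpha x)=\delta_M(\delta_M(s,\alpha),x)$, $\lambda_M(s,\alpha x)=\lambda_M(s,\alpha)\lambda_M(\delta_M(s,\alpha),x)$). An NFA over an alphabet $\varphi$ is $A=(\varphi,S_A,\Delta_A,r_A)$ with $\Delta_A:S_A\times\varphi\to 2^{S_A}$ extended to words; all states are accepting, so for $s\in S_A$ the language $\mathcal{L}_A(s)$ is the set of words $\alpha$ with $\Delta_A(s,\alpha)\neq\emptyset$ (a prefix-closed set containing $\epsilon$), and $\mathcal{L}_A=\mathcal{L}_A(r_A)$. For pairs (locations) $(s,a),(t,b)\in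 S_M\times S_A$: a word $\alpha$ witnesses $(s,a)\nsim(t,b)$ if $\alpha\in\mathcal{L}_A(a)\cap\mathcal{L}_A(b)$ and $\lambda_M(s,\alpha)\neq\lambda_M(t,\alpha)$; the pairs are incompatible, $(s,a)\nsim(t,b)$, if such a witness exists, and compatible, $(s,a)\sim(t,b)$, otherwise. *)

theory Defs
  imports Main
begin

(* Mealy machine M = (I, O, S, delta, lambda, r) with explicit finite carriers. *)
definition mealy ::
  "'i set \<Rightarrow> 'o set \<Rightarrow> 's set \<Rightarrow> ('s \<Rightarrow> 'i \<Rightarrow> 's) \<Rightarrow> ('s \<Rightarrow> 'i \<Rightarrow> 'o) \<Rightarrow> 's \<Rightarrow> bool" where
  "mealy I Out S \<tau> \<mu> r \<longleftrightarrow> finite I \<and> finite Out \<and> finite S \<and> r \<in> S \<and>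
     (\<forall>s\<in>S. \<forall>x\<in>I. \<tau> s x \<in> S \<and> \<mu> s x \<in> Out)"

primrec delta_word :: "('s \<Rightarrow> 'i \<Rightarrow> 's) \<Rightarrow> 's \<Rightarrow> 'i list \<Rightarrow> 's" where
  "delta_word \<tau> s [] = s"
| "delta_word \<tau> s (x # \<alpha>) = delta_word \<tau> (\<tau> s x) \<alpha>"

primrec lambda_word :: "('s \<Rightarrow> 'i \<Rightarrow> 's) \<Rightarrow> ('s \<Rightarrow> 'i \<Rightarrow> 'o) \<Rightarrow> 's \<Rightarrow> 'i list \<Rightarrow> 'o list" where
  "lambda_word \<tau> \<mu> s [] = []"
| "lambda_word \<tau> \<mu> s (x # \<alpha>) = \<mu> s x # lambda_word \<tau> \<mu> (\<tau> s x) \<alpha>"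

(* NFA A = (phi, S_A, Delta, r) with all states accepting *)
definition nfa :: "'i set \<Rightarrow> 'q set \<Rightarrow> ('q \<Rightarrow> 'i \<Rightarrow> 'q set) \<Rightarrow> 'q \<Rightarrow> bool" where
  "nfa \<phi> S Tr r \<longleftrightarrow> finite \<phi> \<and> finite S \<and> r \<in> S \<and> (\<forall>a\<in>S. \<forall>x\<in>\<phi>. Tr a x \<subseteq> S)"

primrec Delta_word :: "('q \<Rightarrow> 'i \<Rightarrow> 'q set) \<Rightarrow> 'q \<Rightarrow> 'i list \<Rightarrow> 'q set" where
  "Delta_word Tr a [] = {a}"
| "Delta_word Tr a (x # \<alpha>) = (\<Union>q\<in>Tr a x. Delta_word Tr q \<alpha>)"

definition lang :: "'i set \<Rightarrow> ('q \<Rightarrow> 'i \<Rightarrow> 'q set) \<Rightarrow> 'q \<Rightarrow> 'i list set" where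
  "lang \<phi> Tr a = {\<alpha>. set \<alpha> \<subseteq> \<phi> \<and> Delta_word Tr a \<alpha> \<noteq> {}}"

definition witnesses ::
  "'i set \<Rightarrow> ('s \<Rightarrow> 'i \<Rightarrow> 's) \<Rightarrow> ('s \<Rightarrow> 'i \<Rightarrow> 'o) \<Rightarrow> ('q \<Rightarrow> 'i \<Rightarrow> 'q set) \<Rightarrow>
   'i list \<Rightarrow> 's \<times> 'q \<Rightarrow> 's \<times> 'q \<Rightarrow> bool" where
  "witnesses \<phi> \<tau> \<mu> Tr \<alpha> p p' \<longleftrightarrow>
     \<alpha> \<in> lang \<phi> Tr (snd p) \<inter> lang \<phi> Tr (snd p') \<and>
     lambda_word \<tau> \<mu> (fst p) \<alpha> \<noteq> lambda_word \<tau> \<mu> (fst p') \<alpha>"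

definition incompatible ::
  "'i set \<Rightarrow> ('s \<Rightarrow> 'i \<Rightarrow> 's) \<Rightarrow> ('s \<Rightarrow> 'i \<Rightarrow> 'o) \<Rightarrow> ('q \<Rightarrow> 'i \<Rightarrow> 'q set) \<Rightarrow>
   's \<times> 'q \<Rightarrow> 's \<times> 'q \<Rightarrow> bool" where
  "incompatible \<phi> \<tau> \<mu> Tr p p' \<longleftrightarrow> (\<exists>\<alpha>. witnesses \<phi> \<tau> \<mu> Tr \<alpha> p p')"

end

theory Submission
  imports Defs
begin

definition dst where
  "dst I \<tau> \<mu> Tr k q s t \<longleftrightarrow>
     (\<exists>\<alpha>. length \<alpha> \<le> k \<and> \<alpha> \<in> lang I Tr q \<and> lambda_word \<tau> \<mu> s \<alpha> \<noteq> lambda_word \<tau> \<mu> t \<alpha>)"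

lemma dst_mono: "k \<le> m \<Longrightarrow> dst I \<tau> \<mu> Tr k q s t \<Longrightarrow> dst I \<tau> \<mu> Tr m q s t"
  unfolding dst_def by (meson order_trans)

lemma ndst_refl: "\<not> dst I \<tau> \<mu> Tr k q s s"
  unfolding dst_def by auto

lemma ndst_trans: "\<not> dst I \<tau> \<mu> Tr k q s u \<Longrightarrow> \<not> dst I \<tau> \<mu> Tr k q u t \<Longrightarrow> \<not> dst I \<tau> \<mu> Tr k q s t"
  unfolding dst_def by metis

definition stab where
  "stab I \<tau> \<mu> Tr SM SA k \<longleftrightarrow> (\<forall>q\<in>SA. \<forall>s\<in>SM. \<forall>t\<in>SM. dst I \<tau> \<mu> Tr (Suc k) q s t \<longrightarrow> dst I \<tau> \<mu> Tr k q s t)"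

lemma stab_step:
  assumes M: "mealy I Out SM \<tau> \<mu> rM" and A: "nfa I SA Tr rA"
    and st: "stab I \<tau> \<mu> Tr SM SA k"
  shows "stab I \<tau> \<mu> Tr SM SA (Suc k)"
  unfolding stab_def
proof (intro ballI impI)
  fix q s t assume q: "q \<in> SA" and s: "s \<in> SM" and t: "t \<in> SM"
    and d: "dst I \<tau> \<mu> Tr (Suc (Suc k)) q s t"
  then obtain \<alpha> where l: "length \<alpha> \<le> Suc (Suc k)" and al: "\<alpha> \<in> lang I Tr q"
    and ne: "lambda_word \<tau> \<mu> s \<alpha> \<noteq> lambda_word \<tau> \<mu> t \<alpha>"
    unfolding dst_def by blast
  then obtain x \<beta> where ab: "\<alpha> = x # \<beta>" by (cases \<alpha>) auto
  from al ab have xI: "x \<in> I" and bI: "set \<beta> \<subseteq> I" by (auto simp: lang_def)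
  from al ab obtain q' where q': "q' \<in> Tr q x" and nq: "Delta_word Tr q' \<beta> \<noteq> {}"
    by (auto simp: lang_def)
  have q'SA: "q' \<in> SA" using A q q' xI unfolding nfa_def by blast
  have sx: "\<tau> s x \<in> SM" "\<tau> t x \<in> SM" using M s t xI unfolding mealy_def by auto
  show "dst I \<tau> \<mu> Tr (Suc k) q s t"
  proof (cases "\<mu> s x = \<mu> t x")
    case False
    have "[x] \<in> lang I Tr q" using xI q' by (auto simp: lang_def)
    then show ?thesis using False unfolding dst_def
      by (intro exI[of _ "[x]"]) auto
  next
    case True
    with ne ab have "lambda_word \<tau> \<mu> (\<tau> s x) \<beta> \<noteq> lambda_word \<tau> \<mu> (\<tau> t x) \<beta>" by simp
    moreover have "\<beta> \<in> lang I Tr q'" using bI nq by (simp add: lang_def)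
    ultimately have "dst I \<tau> \<mu> Tr (Suc k) q' (\<tau> s x) (\<tau> t x)"
      using l ab unfolding dst_def by (intro exI[of _ \<beta>]) auto
    with st q'SA sx have "dst I \<tau> \<mu> Tr k q' (\<tau> s x) (\<tau> t x)" unfolding stab_def by blast
    then obtain \<gamma> where g: "length \<gamma> \<le> k" "\<gamma> \<in> lang I Tr q'"
      "lambda_word \<tau> \<mu> (\<tau> s x) \<gamma> \<noteq> lambda_word \<tau> \<mu> (\<tau> t x) \<gamma>" unfolding dst_def by blast
    have "x # \<gamma> \<in> lang I Tr q" using g(2) xI q' by (auto simp: lang_def)
    then show ?thesis using g True unfolding dst_def by (intro exI[of _ "x # \<gamma>"]) auto
  qed
qed

lemma stab_all:
  assumes M: "mealy I Out SM \<tau> \<mu> rM" and A: "nfa I SA Tr rA"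
    and st: "stab I \<tau> \<mu> Tr SM SA k"
    and q: "q \<in> SA" and s: "s \<in> SM" and t: "t \<in> SM"
  shows "dst I \<tau> \<mu> Tr (k + j) q s t \<Longrightarrow> dst I \<tau> \<mu> Tr k q s t"
proof -
  have stj: "stab I \<tau> \<mu> Tr SM SA (k + j)" for j
    by (induction j) (use st stab_step[OF M A] in auto)
  show "dst I \<tau> \<mu> Tr (k + j) q s t \<Longrightarrow> dst I \<tau> \<mu> Tr k q s t"
  proof (induction j)
    case 0 then show ?case by simp
  next
    case (Suc j)
    then show ?case using stj[of j] q s t unfolding stab_def by auto
  qed
qed

definition cls where
  "cls I \<tau> \<mu> Tr SM k q = (\<lambda>s. {t\<in>SM. \<not> dst I \<tau> \<mu> Tr k q s t}) ` SM"

lemma cls_card_le: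
  assumes "finite SM" shows "card (cls I \<tau> \<mu> Tr SM k q) \<le> card SM"
  unfolding cls_def using assms by (rule card_image_le)

lemma cls_card_mono:
  assumes fin: "finite SM"
  shows "card (cls I \<tau> \<mu> Tr SM k q) \<le> card (cls I \<tau> \<mu> Tr SM (Suc k) q)"
    and "(\<exists>s\<in>SM. \<exists>t\<in>SM. dst I \<tau> \<mu> Tr (Suc k) q s t \<and> \<not> dst I \<tau> \<mu> Tr k q s t) \<Longrightarrow>
         card (cls I \<tau> \<mu> Tr SM k q) < card (cls I \<tau> \<mu> Tr SM (Suc k) q)"
proof -
  define f1 where "f1 = (\<lambda>s. {t\<in>SM. \<not> dst I \<tau> \<mu> Tr (Suc k) q s t})"
  define f0 where "f0 = (\<lambda>s. {t\<in>SM. \<not> dst I \<tau> \<mu> Tr k q s t})"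
  define g where "g = (\<lambda>C. {t\<in>SM. \<exists>u\<in>C. \<not> dst I \<tau> \<mu> Tr k q u t})"
  have gf: "g (f1 s) = f0 s" if "s \<in> SM" for s
  proof
    show "g (f1 s) \<subseteq> f0 s"
    proof
      fix t assume "t \<in> g (f1 s)"
      then obtain u where t: "t \<in> SM" and u1: "\<not> dst I \<tau> \<mu> Tr (Suc k) q s u"
        and u0: "\<not> dst I \<tau> \<mu> Tr k q u t" unfolding g_def f1_def by blast
      have "\<not> dst I \<tau> \<mu> Tr k q s u"
      proof
        assume "dst I \<tau> \<mu> Tr k q s u"
        then have "dst I \<tau> \<mu> Tr (Suc k) q s u" by (rule dst_mono[rotated]) simp
        with u1 show False by contradiction
      qed
      then have "\<not> dst I \<tau> \<mu> Tr k q s t" using u0 by (rule ndst_trans)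
      then show "t \<in> f0 s" using t unfolding f0_def by blast
    qed
    show "f0 s \<subseteq> g (f1 s)"
    proof
      fix t assume "t \<in> f0 s"
      then have t: "t \<in> SM" "\<not> dst I \<tau> \<mu> Tr k q s t" unfolding f0_def by auto
      have "s \<in> f1 s" using that ndst_refl[of I \<tau> \<mu> Tr "Suc k" q s] unfolding f1_def by simp
      then show "t \<in> g (f1 s)" using t unfolding g_def by blast
    qed
  qed
  have eq: "cls I \<tau> \<mu> Tr SM k q = g ` cls I \<tau> \<mu> Tr SM (Suc k) q"
    unfolding cls_def f0_def[symmetric] f1_def[symmetric] image_image
    using gf by (auto simp: image_iff)
  have finc: "finite (cls I \<tau> \<mu> Tr SM (Suc k) q)" unfolding cls_def using fin by simp
  show "card (cls I \<tau> \<mu> Tr SM k q) \<le> card (cls I \<tau> \<mu> Tr SM (Suc k) q)"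
    unfolding eq using finc by (rule card_image_le)
  assume "\<exists>s\<in>SM. \<exists>t\<in>SM. dst I \<tau> \<mu> Tr (Suc k) q s t \<and> \<not> dst I \<tau> \<mu> Tr k q s t"
  then obtain s t where s: "s \<in> SM" and t: "t \<in> SM" and d1: "dst I \<tau> \<mu> Tr (Suc k) q s t"
    and d0: "\<not> dst I \<tau> \<mu> Tr k q s t" by blast
  have "t \<in> f1 t" using t ndst_refl[of I \<tau> \<mu> Tr "Suc k" q t] unfolding f1_def by simp
  moreover have "t \<notin> f1 s" using d1 unfolding f1_def by simp
  ultimately have "f1 s \<noteq> f1 t" by blast
  moreover have "f0 s = f0 t"
  proof -
    have "\<not> dst I \<tau> \<mu> Tr k q t s" using d0 unfolding dst_def by metis
    show ?thesis unfolding f0_def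
    proof (intro Collect_cong conj_cong refl iffI)
      fix u assume "\<not> dst I \<tau> \<mu> Tr k q s u"
      with \<open>\<not> dst I \<tau> \<mu> Tr k q t s\<close> show "\<not> dst I \<tau> \<mu> Tr k q t u" by (rule ndst_trans)
    next
      fix u assume "\<not> dst I \<tau> \<mu> Tr k q t u"
      with d0 show "\<not> dst I \<tau> \<mu> Tr k q s u" by (rule ndst_trans)
    qed
  qed
  ultimately have "\<not> inj_on g (cls I \<tau> \<mu> Tr SM (Suc k) q)"
    using gf s t unfolding cls_def f1_def[symmetric] inj_on_def by (metis imageI)
  then have "card (g ` cls I \<tau> \<mu> Tr SM (Suc k) q) \<noteq> card (cls I \<tau> \<mu> Tr SM (Suc k) q)"
    using eq_card_imp_inj_on[OF finc] by blast
  moreover have "card (g ` cls I \<tau> \<mu> Tr SM (Suc k) q) \<le> card (cls I \<tau> \<mu> Tr SM (Suc k) q)"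
    using finc by (rule card_image_le)
  ultimately show "card (cls I \<tau> \<mu> Tr SM k q) < card (cls I \<tau> \<mu> Tr SM (Suc k) q)"
    unfolding eq by linarith
qed

definition NN where
  "NN I \<tau> \<mu> Tr SM SA k = (\<Sum>q\<in>SA. card (cls I \<tau> \<mu> Tr SM k q))"

lemma NN_le: assumes "finite SM" "finite SA"
  shows "NN I \<tau> \<mu> Tr SM SA k \<le> card SM * card SA"
proof -
  have "NN I \<tau> \<mu> Tr SM SA k \<le> (\<Sum>q\<in>SA. card SM)"
    unfolding NN_def by (rule sum_mono) (rule cls_card_le[OF assms(1)])
  also have "\<dots> = card SA * card SM" by simp
  finally show ?thesis by (metis mult.commute)
qed

lemma NN_incr: assumes "finite SM" "finite SA" "\<not> stab I \<tau> \<mu> Tr SM SA k"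
  shows "NN I \<tau> \<mu> Tr SM SA k < NN I \<tau> \<mu> Tr SM SA (Suc k)"
proof -
  from assms(3) obtain q where q: "q \<in> SA" and
    ex: "\<exists>s\<in>SM. \<exists>t\<in>SM. dst I \<tau> \<mu> Tr (Suc k) q s t \<and> \<not> dst I \<tau> \<mu> Tr k q s t"
    unfolding stab_def by blast
  show ?thesis unfolding NN_def
  proof (rule sum_strict_mono_ex1[OF assms(2)])
    show "\<forall>x\<in>SA. card (cls I \<tau> \<mu> Tr SM k x) \<le> card (cls I \<tau> \<mu> Tr SM (Suc k) x)"
      apply (intro ballI) apply (rule cls_card_mono(1)) using assms(1) apply assumption done
    show "\<exists>a\<in>SA. card (cls I \<tau> \<mu> Tr SM k a) < card (cls I \<tau> \<mu> Tr SM (Suc k) a)"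
      using cls_card_mono(2)[OF assms(1) ex] q by (intro bexI)
  qed
qed

lemma exists_stab:
  assumes "finite SM" "finite SA"
  shows "\<exists>K\<le>card SM * card SA. stab I \<tau> \<mu> Tr SM SA K"
proof (rule ccontr)
  assume "\<not> ?thesis"
  then have ns: "\<And>k. k \<le> card SM * card SA \<Longrightarrow> \<not> stab I \<tau> \<mu> Tr SM SA k" by auto
  have "k \<le> card SM * card SA + 1 \<Longrightarrow> k \<le> NN I \<tau> \<mu> Tr SM SA k" for k
  proof (induction k)
    case 0 then show ?case by simp
  next
    case (Suc k)
    then show ?case using NN_incr[OF assms ns[of k]] by simp
  qed
  then have "card SM * card SA + 1 \<le> NN I \<tau> \<mu> Tr SM SA (card SM * card SA + 1)" by simp
  with NN_le[OF assms] show False by (metis add_le_same_cancel1 le_trans not_one_le_zero)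
qed

theorem theorem1:
  fixes I :: "'i set" and Out :: "'o set" and SM :: "'s set"
    and \<tau> :: "'s \<Rightarrow> 'i \<Rightarrow> 's" and \<mu> :: "'s \<Rightarrow> 'i \<Rightarrow> 'o" and rM :: 's
    and SA :: "'q set" and Tr :: "'q \<Rightarrow> 'i \<Rightarrow> 'q set" and rA :: 'q
    and s t :: 's and a b :: 'q
  assumes "mealy I Out SM \<tau> \<mu> rM"
    and "nfa I SA Tr rA"
    and "s \<in> SM" and "t \<in> SM" and "a \<in> SA" and "b \<in> SA"
    and "lang I Tr b \<subseteq> lang I Tr a"
    and "incompatible I \<tau> \<mu> Tr (s, a) (t, b)"
  shows "\<exists>\<alpha>\<in>lang I Tr b. witnesses I \<tau> \<mu> Tr \<alpha> (s, a) (t, b) \<and>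
           length \<alpha> \<le> card SM * card SA"
proof -
  have fin: "finite SM" "finite SA" using assms(1,2) by (auto simp: mealy_def nfa_def)
  obtain K where K: "K \<le> card SM * card SA" and st: "stab I \<tau> \<mu> Tr SM SA K"
    using exists_stab[OF fin] by blast
  from assms(8) obtain \<alpha> where w: "witnesses I \<tau> \<mu> Tr \<alpha> (s, a) (t, b)"
    unfolding incompatible_def by blast
  then have ab: "\<alpha> \<in> lang I Tr b" and ne: "lambda_word \<tau> \<mu> s \<alpha> \<noteq> lambda_word \<tau> \<mu> t \<alpha>"
    unfolding witnesses_def by auto
  have "dst I \<tau> \<mu> Tr (K + (length \<alpha> - K)) b s t"
    unfolding dst_def using ab ne by (intro exI[of _ \<alpha>]) auto
  then have "dst I \<tau> \<mu> Tr K b s t"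
    by (rule stab_all[OF assms(1,2) st assms(6,3,4)])
  then obtain \<beta> where b: "length \<beta> \<le> K" "\<beta> \<in> lang I Tr b"
    "lambda_word \<tau> \<mu> s \<beta> \<noteq> lambda_word \<tau> \<mu> t \<beta>" unfolding dst_def by blast
  then have "witnesses I \<tau> \<mu> Tr \<beta> (s, a) (t, b)"
    using assms(7) unfolding witnesses_def by auto
  then show ?thesis using b K by auto
qed

end
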